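(* Let $X$ be a Peano continuum and $f:X\to X$ a cw-expansive homeomorphism with cw-expansivity constant $\alpha>0$. Then a point $x\in X$ is a sink if and only if $CW^s_{\alpha/2}(x)$ is a neighborhood of $x$.
   Context: A Peano continuum is a compact, connected, locally connected metric space $(X,d)$ with more than one point. A homeomorphism $f:X\to X$ of a compact metric space is continuum-wise expansive (cw-expansive) with cw-expansivity constant $\alpha>0$ if $\sup_{n\in\mathbb Z}\operatorname{diam} f^n(C)>\alpha$ for every continuum $C\subset X$ containing more than one point. For $\varepsilon>0$ and $x\in X$: $W^s_\varepsilon(x)=\{y\in X:\ d(f^n(x),f^n(y))\le\varepsilon \text{ for all } n\ge 0\}$; $CW^s_\varepsilon(x)$ is the connected component of $W^s_\varepsilon(x)$ containing $x$; $W^s(x)=\{y\in X:\ d(f^n(x),f^n(y))\to 0 \text{ as } n\to\infty\}$. A point $x$ is a weak sink if $W^s_\varepsilon(x)$ is a neighborhood of $x$ for every $\varepsilon>0$; $x$ is a sink if it is a weak sink and there exists $\varepsilon>0$ with $W^s_\varepsilon(x)\subset W^s(x)$. (Sinks are not required to be periodic.) *)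

theory Defs
  imports "HOL-Analysis.Analysis"
begin

text \<open>Peano continuum: compact, connected, locally connected metric space with more than one point.
  The space X is represented as a subset S of a metric space type with the induced metric.\<close>
definition peano_continuum :: "'a::metric_space set \<Rightarrow> bool" where
  "peano_continuum S \<longleftrightarrow> compact S \<and> connected S \<and> locally connected S \<and>
     (\<exists>x\<in>S. \<exists>y\<in>S. x \<noteq> y)"

definition iter_int :: "'a set \<Rightarrow> ('a \<Rightarrow> 'a) \<Rightarrow> int \<Rightarrow> 'a \<Rightarrow> 'a" where
  "iter_int S f n = (if 0 \<le> n then f ^^ nat n else (inv_into S f) ^^ nat (- n))"

definition cw_expansive :: "'a::metric_space set \<Rightarrow> ('a \<Rightarrow> 'a) \<Rightarrow> real \<Rightarrow> bool" where
  "cw_expansive S f \<alpha> \<longleftrightarrow> \<alpha> > 0 \<and>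
     (\<forall>C. C \<subseteq> S \<and> compact C \<and> connected C \<and> (\<exists>x\<in>C. \<exists>y\<in>C. x \<noteq> y) \<longrightarrow>
        (SUP n::int. diameter (iter_int S f n ` C)) > \<alpha>)"

definition local_stable_set :: "'a::metric_space set \<Rightarrow> ('a \<Rightarrow> 'a) \<Rightarrow> real \<Rightarrow> 'a \<Rightarrow> 'a set" where
  "local_stable_set S f \<epsilon> x = {y \<in> S. \<forall>n::nat. dist ((f ^^ n) x) ((f ^^ n) y) \<le> \<epsilon>}"

definition cw_local_stable_set :: "'a::metric_space set \<Rightarrow> ('a \<Rightarrow> 'a) \<Rightarrow> real \<Rightarrow> 'a \<Rightarrow> 'a set" where
  "cw_local_stable_set S f \<epsilon> x = connected_component_set (local_stable_set S f \<epsilon> x) x"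

definition stable_set :: "'a::metric_space set \<Rightarrow> ('a \<Rightarrow> 'a) \<Rightarrow> 'a \<Rightarrow> 'a set" where
  "stable_set S f x = {y \<in> S. (\<lambda>n. dist ((f ^^ n) x) ((f ^^ n) y)) \<longlonglongrightarrow> 0}"

definition nbhd_in :: "'a::topological_space set \<Rightarrow> 'a set \<Rightarrow> 'a \<Rightarrow> bool" where
  "nbhd_in S A x \<longleftrightarrow> (\<exists>U. openin (top_of_set S) U \<and> x \<in> U \<and> U \<subseteq> A)"

definition weak_sink :: "'a::metric_space set \<Rightarrow> ('a \<Rightarrow> 'a) \<Rightarrow> 'a \<Rightarrow> bool" where
  "weak_sink S f x \<longleftrightarrow> (\<forall>\<epsilon>>0. nbhd_in S (local_stable_set S f \<epsilon> x) x)"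

definition sink :: "'a::metric_space set \<Rightarrow> ('a \<Rightarrow> 'a) \<Rightarrow> 'a \<Rightarrow> bool" where
  "sink S f x \<longleftrightarrow> weak_sink S f x \<and>
     (\<exists>\<epsilon>>0. local_stable_set S f \<epsilon> x \<subseteq> stable_set S f x)"

end

theory Submission
  imports Defs
begin


lemma funpow_in: "f ` S \<subseteq> S \<Longrightarrow> y \<in> S \<Longrightarrow> (f^^n) y \<in> S"
  by (induction n) auto

lemma funpow_cont: "continuous_on S f \<Longrightarrow> f ` S \<subseteq> S \<Longrightarrow> continuous_on S (f^^n)"
proof (induction n)
  case 0 then show ?case by (simp add: continuous_on_id)
next
  case (Suc n)
  have "(f ^^ n) ` S \<subseteq> S" using funpow_in[OF Suc.prems(2)] by blast
  then have "continuous_on S (f \<circ> (f^^n))"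
    using Suc continuous_on_compose[of S "f^^n" f] continuous_on_subset[of S f "(f^^n) ` S"] by simp
  then show ?case by simp
qed

lemma g_f_pow:
  assumes "\<forall>x\<in>S. g (f x) = x" "f ` S \<subseteq> S"
  shows "k \<le> m \<Longrightarrow> y \<in> S \<Longrightarrow> (g^^k) ((f^^m) y) = (f^^(m-k)) y"
proof (induction k)
  case 0 then show ?case by simp
next
  case (Suc k)
  then have IH: "(g^^k) ((f^^m) y) = (f^^(m-k)) y" by simp
  have e: "m - k = Suc (m - Suc k)" using Suc.prems by simp
  have "(f ^^ (m - Suc k)) y \<in> S" using funpow_in[OF assms(2) Suc.prems(2)] .
  then show ?case using IH e assms(1) by simp
qed

lemma inv_pow_eq:
  assumes "homeomorphism S S f g" "y \<in> S"
  shows "((inv_into S f)^^k) y = (g^^k) y"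
  using assms(2)
proof (induction k)
  case 0 then show ?case by simp
next
  case (Suc k)
  have h: "\<forall>x\<in>S. g (f x) = x" "\<forall>y\<in>S. f (g y) = y" "g ` S = S" "f ` S = S"
    using assms(1) unfolding homeomorphism_def by auto
  have inj: "inj_on f S" using h(1) by (intro inj_on_inverseI[of S g]) auto
  have gS: "(g^^k) y \<in> S" using funpow_in[of g S] h(3) Suc.prems by blast
  have "inv_into S f ((g^^k) y) = g ((g^^k) y)"
  proof -
    have "(g^^k) y = f (g ((g^^k) y))" using h(2) gS by simp
    moreover have "g ((g^^k) y) \<in> S" using gS h(3) by blast
    ultimately show ?thesis using inv_into_f_f[OF inj, of "g ((g^^k) y)"] by simp
  qed
  then show ?case using Suc by simp
qed

lemma iter_int_props:
  assumes "homeomorphism S S f g"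
  shows "continuous_on S (iter_int S f j)"
    and "iter_int S f j ` S \<subseteq> S"
    and "y \<in> S \<Longrightarrow> int m + j \<ge> 0 \<Longrightarrow> iter_int S f j ((f^^m) y) = (f^^nat (int m + j)) y"
proof -
  have h: "\<forall>x\<in>S. g (f x) = x" "\<forall>y\<in>S. f (g y) = y" "g ` S = S" "f ` S = S"
    "continuous_on S f" "continuous_on S g"
    using assms(1) unfolding homeomorphism_def by auto
  show "continuous_on S (iter_int S f j)"
  proof (cases "0 \<le> j")
    case True then show ?thesis unfolding iter_int_def using funpow_cont[of S f] h by simp
  next
    case False
    have "continuous_on S (g ^^ nat (-j))" using funpow_cont[of S g] h by simp
    moreover have "\<And>y. y \<in> S \<Longrightarrow> iter_int S f j y = (g ^^ nat (-j)) y"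
      unfolding iter_int_def using False inv_pow_eq[OF assms] by simp
    ultimately show ?thesis using continuous_on_cong[of S S] by blast
  qed
  show "iter_int S f j ` S \<subseteq> S"
  proof (cases "0 \<le> j")
    case True then show ?thesis unfolding iter_int_def using funpow_in[of f S] h by auto
  next
    case False
    then show ?thesis unfolding iter_int_def using funpow_in[of g S] h inv_pow_eq[OF assms] by auto
  qed
  assume y: "y \<in> S" and mj: "int m + j \<ge> 0"
  show "iter_int S f j ((f^^m) y) = (f^^nat (int m + j)) y"
  proof (cases "0 \<le> j")
    case True
    then have "nat (int m + j) = nat j + m" by simp
    then show ?thesis unfolding iter_int_def using True by (simp add: funpow_add)
  next
    case False
    have fy: "(f^^m) y \<in> S" using funpow_in[of f S] h y by auto
    have "iter_int S f j ((f^^m) y) = (g^^nat(-j)) ((f^^m) y)"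
      unfolding iter_int_def using False inv_pow_eq[OF assms fy] by simp
    also have "\<dots> = (f^^(m - nat(-j))) y" using g_f_pow[of S g f] h y False mj by simp
    also have "m - nat(-j) = nat (int m + j)" using False mj by simp
    finally show ?thesis .
  qed
qed



lemma limsup_closed:
  fixes S :: "'a::metric_space set" and Ck :: "nat \<Rightarrow> 'a set"
  assumes S: "compact S"
  shows "closed {p\<in>S. \<forall>e>0. \<forall>N. \<exists>k\<ge>N. \<exists>q\<in>Ck k. dist p q < e}" (is "closed ?D")
  unfolding closed_sequential_limits
proof (intro allI impI, elim conjE)
  fix xs l assume xs: "\<forall>n. xs n \<in> ?D" and lim: "xs \<longlonglongrightarrow> l"
  have "closed S" using S compact_imp_closed by blast
  then have lS: "l \<in> S" using xs lim unfolding closed_sequential_limits by blast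
  have "\<forall>e>0. \<forall>N. \<exists>k\<ge>N. \<exists>q\<in>Ck k. dist l q < e"
  proof (intro allI impI)
    fix e :: real and N assume e: "e > 0"
    then have e2: "e/2 > 0" by simp
    obtain M where M: "\<forall>n\<ge>M. dist (xs n) l < e/2" using lim e2 unfolding lim_sequentially by blast
    then have d: "dist (xs M) l < e/2" by simp
    have "xs M \<in> ?D" using xs by blast
    then obtain k q where kq: "k\<ge>N" "q \<in> Ck k" "dist (xs M) q < e/2" using e2 by blast
    have "dist l q \<le> dist (xs M) l + dist (xs M) q" by (rule dist_triangle3)
    then show "\<exists>k\<ge>N. \<exists>q\<in>Ck k. dist l q < e" using kq d by force
  qed
  then show "l \<in> ?D" using lS by blast
qed

lemma limsup_mem:
  fixes S :: "'a::metric_space set" and Ck :: "nat \<Rightarrow> 'a set"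
  assumes S: "compact S" and CkS: "\<And>k. Ck k \<subseteq> S"
    and t: "\<And>k. t k \<in> Ck k" and lim: "t \<longlonglongrightarrow> b"
  shows "b \<in> {p\<in>S. \<forall>e>0. \<forall>N. \<exists>k\<ge>N. \<exists>q\<in>Ck k. dist p q < e}"
proof -
  have "closed S" using S compact_imp_closed by blast
  then have bS: "b \<in> S" using t CkS lim unfolding closed_sequential_limits by blast
  have "\<forall>e>0. \<forall>N. \<exists>k\<ge>N. \<exists>q\<in>Ck k. dist b q < e"
  proof (intro allI impI)
    fix e :: real and N assume e: "e > 0"
    obtain M where M: "\<forall>n\<ge>M. dist (t n) b < e" using lim e unfolding lim_sequentially by blast
    have "max M N \<ge> N" "t (max M N) \<in> Ck (max M N)" "dist b (t (max M N)) < e"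
      using M t by (auto simp: dist_commute)
    then show "\<exists>k\<ge>N. \<exists>q\<in>Ck k. dist b q < e" by blast
  qed
  then show ?thesis using bS by blast
qed

lemma limsup_connected:
  fixes S :: "'a::metric_space set" and Ck :: "nat \<Rightarrow> 'a set"
  assumes S: "compact S" and CkS: "\<And>k. Ck k \<subseteq> S"
    and conn: "\<And>k. connected (Ck k)"
    and s: "\<And>k. s k \<in> Ck k" and lim: "s \<longlonglongrightarrow> a"
  shows "connected {p\<in>S. \<forall>e>0. \<forall>N. \<exists>k\<ge>N. \<exists>q\<in>Ck k. dist p q < e}" (is "connected ?D")
proof -
  have cl: "closed ?D" by (rule limsup_closed[OF S])
  have aD: "a \<in> ?D" by (rule limsup_mem[OF S CkS s lim])
  have key: False if AB: "closed A" "closed B" "A \<union> B = ?D" "A \<inter> B = {}" "a \<in> A" "B \<noteq> {}" for A B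
  proof -
    obtain U V where UV: "open U" "open V" "A \<subseteq> U" "B \<subseteq> V" "U \<inter> V = {}"
      using t4_space[of A B] AB by blast
    have "\<exists>N. \<forall>k\<ge>N. Ck k \<subseteq> U \<union> V"
    proof (rule ccontr)
      assume "\<not> ?thesis"
      then have "\<forall>N. \<exists>k\<ge>N. \<exists>z\<in>Ck k. z \<notin> U \<union> V" by blast
      then obtain kk zz where kk: "\<And>N. kk N \<ge> N" "\<And>N. zz N \<in> Ck (kk N)" "\<And>N. zz N \<notin> U \<union> V"
        by metis
      have K: "compact (S - (U \<union> V))" using S UV by (intro compact_diff) auto
      have "\<forall>N. zz N \<in> S - (U \<union> V)" using CkS kk by blast
      then obtain z r where z: "z \<in> S - (U \<union> V)" "strict_mono r" "(zz \<circ> r) \<longlonglongrightarrow> z"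
        using compact_imp_seq_compact[OF K] unfolding seq_compact_def by metis
      have "\<forall>e>0. \<forall>N. \<exists>k\<ge>N. \<exists>q\<in>Ck k. dist z q < e"
      proof (intro allI impI)
        fix e :: real and N assume e: "e > 0"
        obtain M where M: "\<forall>n\<ge>M. dist ((zz \<circ> r) n) z < e" using z(3) e unfolding lim_sequentially by blast
        define i where "i = max M N"
        have "r i \<ge> i" using seq_suble[OF z(2)] by blast
        then have "kk (r i) \<ge> N" using kk(1)[of "r i"] unfolding i_def by linarith
        moreover have "zz (r i) \<in> Ck (kk (r i))" using kk by blast
        moreover have "dist z (zz (r i)) < e" using M unfolding i_def by (simp add: dist_commute)
        ultimately show "\<exists>k\<ge>N. \<exists>q\<in>Ck k. dist z q < e" by blast
      qed
      then have "z \<in> ?D" using z by blast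
      then show False using z AB UV by blast
    qed
    then obtain N1 where N1: "\<And>k. k \<ge> N1 \<Longrightarrow> Ck k \<subseteq> U \<union> V" by blast
    have "eventually (\<lambda>k. s k \<in> U) sequentially"
      using topological_tendstoD[OF lim UV(1)] AB UV by blast
    then obtain N2 where N2: "\<And>k. k \<ge> N2 \<Longrightarrow> s k \<in> U" unfolding eventually_sequentially by blast
    obtain b' where b': "b' \<in> B" using AB by blast
    then have b'V: "b' \<in> V" and b'D: "b' \<in> ?D" using UV AB by blast+
    obtain e where e: "e > 0" "ball b' e \<subseteq> V" using open_contains_ball b'V UV by blast
    obtain k q where kq: "k \<ge> max N1 N2" "q \<in> Ck k" "dist b' q < e" using b'D e by blast
    have qV: "q \<in> V" using kq e by auto
    have "U \<inter> Ck k = {} \<or> V \<inter> Ck k = {}"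
      by (rule connectedD[OF conn UV(1,2)]) (use UV N1 kq in auto)
    then show False using N2[of k] kq qV s[of k] by auto
  qed
  show ?thesis
    unfolding connected_closed_set[OF cl]
  proof clarify
    fix A B assume AB: "closed A" "closed B" "A \<noteq> {}" "B \<noteq> {}" "A \<union> B = ?D" "A \<inter> B = {}"
    show False
    proof (cases "a \<in> A")
      case True then show ?thesis using key[of A B] AB by blast
    next
      case False
      then have "a \<in> B" using aD AB by blast
      then show ?thesis using key[of B A] AB by blast
    qed
  qed
qed



lemma contraction:
  fixes S :: "'a::metric_space set"
  assumes S: "compact S" and hom: "homeomorphism S S f g" and cw: "cw_expansive S f \<alpha>"
    and CS: "C \<subseteq> S" and conn: "connected C" and xC: "x \<in> C"
    and bd: "\<And>y n. y \<in> C \<Longrightarrow> dist ((f^^n) x) ((f^^n) y) \<le> \<alpha>/2"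
    and e: "\<epsilon> > 0"
  shows "\<exists>N. \<forall>n\<ge>N. \<forall>y\<in>C. dist ((f^^n) x) ((f^^n) y) < \<epsilon>"
proof (rule ccontr)
  assume "\<not> ?thesis"
  then have "\<forall>N. \<exists>n\<ge>N. \<exists>y\<in>C. \<epsilon> \<le> dist ((f^^n) x) ((f^^n) y)" by (meson not_le)
  then obtain nn yy where nn: "\<And>N. nn N \<ge> N" "\<And>N. yy N \<in> C"
      "\<And>N. \<epsilon> \<le> dist ((f^^nn N) x) ((f^^nn N) (yy N))" by metis
  have fS: "f ` S \<subseteq> S" and fc: "continuous_on S f"
    using hom unfolding homeomorphism_def by auto
  define P where "P k = ((f^^nn k) x, (f^^nn k) (yy k))" for k
  have "\<forall>k. P k \<in> S \<times> S" using funpow_in[OF fS] CS xC nn(2) unfolding P_def by blast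
  then obtain l r where l: "l \<in> S \<times> S" "strict_mono r" "(P \<circ> r) \<longlonglongrightarrow> l"
    using compact_imp_seq_compact[OF compact_Times[OF S S]] unfolding seq_compact_def by metis
  obtain a b where ab: "l = (a,b)" by (cases l)
  have aS: "a \<in> S" and bS: "b \<in> S" using l(1) ab by auto
  define m where "m k = nn (r k)" for k
  have mk: "m k \<ge> k" for k using nn(1)[of "r k"] seq_suble[OF l(2), of k] unfolding m_def by linarith
  have la: "(\<lambda>k. (f^^m k) x) \<longlonglongrightarrow> a"
    using tendsto_fst[OF l(3)] unfolding ab P_def m_def o_def by simp
  have lb: "(\<lambda>k. (f^^m k) (yy (r k))) \<longlonglongrightarrow> b"
    using tendsto_snd[OF l(3)] unfolding ab P_def m_def o_def by simp
  have "\<epsilon> \<le> dist a b"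
    using LIMSEQ_le_const[OF tendsto_dist[OF la lb]] nn(3) unfolding m_def by blast
  then have anb: "a \<noteq> b" using e by auto
  define Ck where "Ck k = (f^^m k) ` C" for k
  have CkS: "Ck k \<subseteq> S" for k using funpow_in[OF fS] CS unfolding Ck_def by blast
  have Ckc: "connected (Ck k)" for k
  proof -
    have "continuous_on C (f^^m k)"
      using funpow_cont[OF fc fS] continuous_on_subset CS by blast
    then show ?thesis unfolding Ck_def using connected_continuous_image conn by blast
  qed
  define D where "D = {p\<in>S. \<forall>e>0. \<forall>N. \<exists>k\<ge>N. \<exists>q\<in>Ck k. dist p q < e}"
  have Dcl: "closed D" unfolding D_def by (rule limsup_closed[OF S])
  have sC: "(f^^m k) x \<in> Ck k" for k unfolding Ck_def using xC by blast
  have tC: "(f^^m k) (yy (r k)) \<in> Ck k" for k unfolding Ck_def using nn(2) by blast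
  have Dconn: "connected D" unfolding D_def by (rule limsup_connected[OF S CkS Ckc sC la])
  have aD: "a \<in> D" unfolding D_def by (rule limsup_mem[OF S CkS sC la])
  have bD: "b \<in> D" unfolding D_def by (rule limsup_mem[OF S CkS tC lb])
  have DS: "D \<subseteq> S" unfolding D_def by blast
  have Dcomp: "compact D" using compact_Int_closed[OF S Dcl] DS by (simp add: Int_absorb1)
  have bound: "dist (iter_int S f j a) (iter_int S f j p) \<le> \<alpha>/2" if p: "p \<in> D" for j p
  proof -
    have pS: "p \<in> S" using p DS by blast
    have "\<forall>i. \<exists>k \<ge> i + nat \<bar>j\<bar>. \<exists>q\<in>Ck k. dist p q < inverse (real (Suc i))"
      using p unfolding D_def by auto
    then obtain kk qq where kk: "\<And>i. kk i \<ge> i + nat \<bar>j\<bar>" "\<And>i. qq i \<in> Ck (kk i)"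
      "\<And>i. dist p (qq i) < inverse (real (Suc i))" by metis
    have "\<forall>i. \<exists>y\<in>C. qq i = (f^^m (kk i)) y" using kk(2) unfolding Ck_def by blast
    then obtain yy' where yy': "\<And>i. yy' i \<in> C" "\<And>i. qq i = (f^^m (kk i)) (yy' i)" by metis
    have qlim: "qq \<longlonglongrightarrow> p"
      unfolding lim_sequentially
    proof (intro allI impI)
      fix r :: real assume r: "r > 0"
      obtain M where M: "inverse (real (Suc M)) < r" using reals_Archimedean r by blast
      have "dist (qq i) p < r" if "i \<ge> M" for i
      proof -
        have "inverse (real (Suc i)) \<le> inverse (real (Suc M))"
          using that by (intro le_imp_inverse_le) auto
        moreover have "dist (qq i) p = dist p (qq i)" by (rule dist_commute)
        ultimately show ?thesis using kk(3)[of i] M by linarith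
      qed
      then show "\<exists>no. \<forall>n\<ge>no. dist (qq n) p < r" by blast
    qed
    have alim: "(\<lambda>i. (f^^m (kk i)) x) \<longlonglongrightarrow> a"
      unfolding lim_sequentially
    proof (intro allI impI)
      fix r :: real assume r: "r > 0"
      obtain M where M: "\<forall>n\<ge>M. dist ((f^^m n) x) a < r" using la r unfolding lim_sequentially by blast
      have "dist ((f^^m (kk i)) x) a < r" if "i \<ge> M" for i
        using M kk(1)[of i] that by simp
      then show "\<exists>no. \<forall>n\<ge>no. dist ((f^^m (kk n)) x) a < r" by blast
    qed
    have Fc: "continuous_on S (iter_int S f j)" by (rule iter_int_props(1)[OF hom])
    have qS: "qq i \<in> S" for i using kk(2) CkS by blast
    have xS: "(f^^m (kk i)) x \<in> S" for i using funpow_in[OF fS] CS xC by blast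
    have l1: "(\<lambda>i. iter_int S f j (qq i)) \<longlonglongrightarrow> iter_int S f j p"
      by (rule continuous_on_tendsto_compose[OF Fc qlim pS]) (use qS in simp)
    have l2: "(\<lambda>i. iter_int S f j ((f^^m (kk i)) x)) \<longlonglongrightarrow> iter_int S f j a"
      by (rule continuous_on_tendsto_compose[OF Fc alim aS]) (use xS in simp)
    have le: "dist (iter_int S f j ((f^^m (kk i)) x)) (iter_int S f j (qq i)) \<le> \<alpha>/2" for i
    proof -
      have nn0: "int (m (kk i)) + j \<ge> 0" using mk[of "kk i"] kk(1)[of i] by linarith
      have "iter_int S f j ((f^^m (kk i)) x) = (f^^nat (int (m (kk i)) + j)) x"
        using iter_int_props(3)[OF hom _ nn0] CS xC by blast
      moreover have "iter_int S f j (qq i) = (f^^nat (int (m (kk i)) + j)) (yy' i)"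
        using iter_int_props(3)[OF hom _ nn0] CS yy' by (metis subsetD)
      ultimately show ?thesis using bd[OF yy'(1)] by simp
    qed
    show ?thesis
      by (rule LIMSEQ_le_const2[OF tendsto_dist[OF l2 l1]]) (use le in blast)
  qed
  have diam: "diameter (iter_int S f j ` D) \<le> \<alpha>" for j
  proof -
    have ne: "iter_int S f j ` D \<noteq> {}" using aD by blast
    have "(SUP (u,v)\<in>(iter_int S f j ` D) \<times> (iter_int S f j ` D). dist u v) \<le> \<alpha>"
    proof (rule cSUP_least)
      show "(iter_int S f j ` D) \<times> (iter_int S f j ` D) \<noteq> {}" using ne by blast
    next
      fix z assume "z \<in> (iter_int S f j ` D) \<times> (iter_int S f j ` D)"
      then obtain p q where pq: "p \<in> D" "q \<in> D" "z = (iter_int S f j p, iter_int S f j q)" by blast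
      have "dist (iter_int S f j p) (iter_int S f j q) \<le>
            dist (iter_int S f j a) (iter_int S f j p) + dist (iter_int S f j a) (iter_int S f j q)"
        by (rule dist_triangle3)
      then show "(case z of (u, v) \<Rightarrow> dist u v) \<le> \<alpha>" using bound[OF pq(1), of j] bound[OF pq(2), of j] pq(3) by simp
    qed
    then show ?thesis unfolding diameter_def using ne by simp
  qed
  have "(SUP n::int. diameter (iter_int S f n ` D)) \<le> \<alpha>"
    by (rule cSUP_least) (use diam in auto)
  moreover have "(SUP n::int. diameter (iter_int S f n ` D)) > \<alpha>"
    using cw DS Dcomp Dconn aD bD anb unfolding cw_expansive_def by blast
  ultimately show False by simp
qed



lemma openin_finite_stable:
  fixes S :: "'a::metric_space set"
  assumes fc: "continuous_on S f" and fS: "f ` S \<subseteq> S"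
  shows "openin (top_of_set S) {y\<in>S. \<forall>n<N. dist ((f^^n) x) ((f^^n) y) < \<epsilon>}"
proof (induction N)
  case 0 then show ?case by simp
next
  case (Suc N)
  have eq: "{y\<in>S. \<forall>n<Suc N. dist ((f^^n) x) ((f^^n) y) < \<epsilon>} =
      {y\<in>S. \<forall>n<N. dist ((f^^n) x) ((f^^n) y) < \<epsilon>} \<inter> (S \<inter> (f^^N) -` ball ((f^^N) x) \<epsilon>)"
    by (auto simp: less_Suc_eq)
  have "openin (top_of_set S) (S \<inter> (f^^N) -` ball ((f^^N) x) \<epsilon>)"
    by (rule continuous_openin_preimage_gen[OF funpow_cont[OF fc fS]]) simp
  then show ?case unfolding eq using Suc by (rule openin_Int[rotated])
qed

theorem mainTheorem5:
  fixes S :: "'a::metric_space set" and f g :: "'a \<Rightarrow> 'a" and \<alpha> :: real and x :: 'a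
  assumes "peano_continuum S"
    and "homeomorphism S S f g"
    and "cw_expansive S f \<alpha>"
    and "x \<in> S"
  shows "sink S f x \<longleftrightarrow> nbhd_in S (cw_local_stable_set S f (\<alpha>/2) x) x"
proof -
  note hom = assms(2) and cw = assms(3) and xS = assms(4)
  have S: "compact S" and lc: "locally connected S" using assms(1) unfolding peano_continuum_def by auto
  have apos: "\<alpha> > 0" using cw unfolding cw_expansive_def by auto
  have fS: "f ` S \<subseteq> S" and fc: "continuous_on S f"
    using hom unfolding homeomorphism_def by auto
  define W where "W = local_stable_set S f (\<alpha>/2) x"
  define C where "C = cw_local_stable_set S f (\<alpha>/2) x"
  have CW: "C \<subseteq> W" unfolding C_def W_def cw_local_stable_set_def by (rule connected_component_subset)
  have WS: "W \<subseteq> S" unfolding W_def local_stable_set_def by blast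
  show ?thesis unfolding C_def[symmetric]
  proof
    assume "sink S f x"
    then have "nbhd_in S W x" using apos unfolding sink_def weak_sink_def W_def by simp
    then obtain U where U: "openin (top_of_set S) U" "x \<in> U" "U \<subseteq> W" unfolding nbhd_in_def by blast
    obtain V where V: "openin (top_of_set S) V" "connected V" "x \<in> V" "V \<subseteq> U"
      using lc U unfolding locally_connected by blast
    have "V \<subseteq> connected_component_set W x"
      by (rule connected_component_maximal) (use V U in auto)
    then have "V \<subseteq> C" by (simp add: C_def cw_local_stable_set_def W_def)
    then show "nbhd_in S C x" unfolding nbhd_in_def using V by blast
  next
    assume "nbhd_in S C x"
    then obtain U where U: "openin (top_of_set S) U" "x \<in> U" "U \<subseteq> C" unfolding nbhd_in_def by blast
    have xW: "x \<in> W" unfolding W_def local_stable_set_def using xS apos by simp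
    have xC: "x \<in> C" using xW unfolding C_def cw_local_stable_set_def W_def by simp
    have connC: "connected C" unfolding C_def cw_local_stable_set_def by simp
    have CS: "C \<subseteq> S" using CW WS by blast
    have bdC: "dist ((f^^n) x) ((f^^n) y) \<le> \<alpha>/2" if "y \<in> C" for y n
      using that CW unfolding W_def local_stable_set_def by blast
    have contr: "\<exists>N. \<forall>n\<ge>N. \<forall>y\<in>C. dist ((f^^n) x) ((f^^n) y) < \<epsilon>" if "\<epsilon> > 0" for \<epsilon>
      by (rule contraction[OF S hom cw CS connC xC bdC that])
    have ws: "weak_sink S f x"
      unfolding weak_sink_def nbhd_in_def
    proof (intro allI impI)
      fix \<epsilon> :: real assume e: "\<epsilon> > 0"
      obtain N where N: "\<forall>n\<ge>N. \<forall>y\<in>C. dist ((f^^n) x) ((f^^n) y) < \<epsilon>" using contr e by blast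
      define Ob where "Ob = {y\<in>S. \<forall>n<N. dist ((f^^n) x) ((f^^n) y) < \<epsilon>}"
      have Oo: "openin (top_of_set S) Ob" unfolding Ob_def by (rule openin_finite_stable[OF fc fS])
      have xO: "x \<in> Ob" unfolding Ob_def using xS e by simp
      have "U \<inter> Ob \<subseteq> local_stable_set S f \<epsilon> x"
      proof
        fix y assume y: "y \<in> U \<inter> Ob"
        have "dist ((f^^n) x) ((f^^n) y) \<le> \<epsilon>" for n
        proof (cases "n < N")
          case True then show ?thesis using y unfolding Ob_def by force
        next
          case False then show ?thesis using y U N by (metis less_imp_le not_le IntD1 subsetD)
        qed
        then show "y \<in> local_stable_set S f \<epsilon> x" unfolding local_stable_set_def using y Ob_def by blast
      qed
      then show "\<exists>U'. openin (top_of_set S) U' \<and> x \<in> U' \<and> U' \<subseteq> local_stable_set S f \<epsilon> x"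
        using openin_Int[OF U(1) Oo] U(2) xO by blast
    qed
    obtain e where e: "e > 0" "ball x e \<inter> S \<subseteq> U" using U unfolding openin_contains_ball by blast
    have "local_stable_set S f (e/2) x \<subseteq> stable_set S f x"
    proof
      fix y assume y: "y \<in> local_stable_set S f (e/2) x"
      then have yS: "y \<in> S" and "dist ((f^^0) x) ((f^^0) y) \<le> e/2" unfolding local_stable_set_def by blast+
      then have "dist x y < e" using e by simp
      then have yC: "y \<in> C" using e yS U by auto
      have "(\<lambda>n. dist ((f^^n) x) ((f^^n) y)) \<longlonglongrightarrow> 0"
        unfolding lim_sequentially
      proof (intro allI impI)
        fix r :: real assume r: "r > 0"
        obtain N where N: "\<forall>n\<ge>N. \<forall>y\<in>C. dist ((f^^n) x) ((f^^n) y) < r" using contr r by blast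
        then show "\<exists>no. \<forall>n\<ge>no. dist (dist ((f^^n) x) ((f^^n) y)) 0 < r" using yC by auto
      qed
      then show "y \<in> stable_set S f x" unfolding stable_set_def using yS by blast
    qed
    then show "sink S f x" unfolding sink_def using ws e by (metis half_gt_zero)
  qed
qed

end
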